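(* Let $0<p<1$ and $\alpha>-1$. For integers $k\ge1$ and $B$ with $1\le B\le k$, set $$p_{k+1}=1-\frac{(1-p)(k+\alpha B)}{k(1+\alpha p)+\alpha(1-p)}.$$ If $p\ge 1/2$, then $p_{k+1}\ge 0$ for all integers $k\ge 1$ and all integers $1\le B\le k$. If $p<1/2$, then $p_{k+1}\ge0$ for all integers $k\ge1$ and all integers $1\le B\le k$ if and only if $$\alpha\le \frac{p}{1-2p}.$$
   Context: This concerns the urn transfer process ($p_k$-model): urns $urn_1,urn_2,\dots$, $F_i(k)$ balls in $urn_i$ after $k$ steps, starting from a single ball in $urn_1$; at stage $k+1$ a new ball is added to $urn_1$ with probability $p_{k+1}=1-\frac{(1-p)\sum_i (i+\alpha)F_i(k)}{k(1+\alpha p)+\alpha(1-p)}$, otherwise a ball is moved from $urn_i$ to $urn_{i+1}$, $urn_i$ chosen with probability $\frac{(1-p)(i+\alpha)F_i(k)}{k(1+\alpha p)+\alpha(1-p)}$. Since $\sum_i iF_i(k)=k$, writing $B(k)=\sum_iF_i(k)$ (which satisfies $1\le B(k)\le k$) gives the formula for $p_{k+1}$ in the claim with $B=B(k)$; the process is well defined at stage $k+1$ exactly when $p_{k+1}\ge0$ (note $p_{k+1}<1$ always). *)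

theory Defs
  imports Complex_Main
begin

definition p_next :: "real \<Rightarrow> real \<Rightarrow> nat \<Rightarrow> nat \<Rightarrow> real" where
  "p_next p \<alpha> k B = 1 - ((1 - p) * (real k + \<alpha> * real B)) /
       (real k * (1 + \<alpha> * p) + \<alpha> * (1 - p))"

end

theory Submission
  imports Defs
begin

lemma D_pos:
  fixes p \<alpha> :: real
  assumes "0 < p" "p < 1" "\<alpha> > -1" "1 \<le> k"
  shows "real k * (1 + \<alpha> * p) + \<alpha> * (1 - p) > 0"
proof -
  have a: "1 + \<alpha> * p > 0"
  proof (cases "\<alpha> \<ge> 0")
    case True then show ?thesis using assms by (simp add: add_pos_nonneg)
  next
    case False
    have "\<alpha> * p > -1 * p" using assms False by (intro mult_strict_right_mono) auto
    then show ?thesis using assms by linarith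
  qed
  have "real k * (1 + \<alpha> * p) \<ge> 1 * (1 + \<alpha> * p)"
    using a assms by (intro mult_right_mono) auto
  then show ?thesis using assms by (simp add: algebra_simps)
qed

lemma key:
  fixes p \<alpha> :: real
  assumes "0 < p" "p < 1" "\<alpha> > -1" "1 \<le> k"
  shows "p_next p \<alpha> k B \<ge> 0 \<longleftrightarrow> real k * p * (1 + \<alpha>) - \<alpha> * (1 - p) * (real B - 1) \<ge> 0"
proof -
  define D where "D = real k * (1 + \<alpha> * p) + \<alpha> * (1 - p)"
  have D: "D > 0" using D_pos[OF assms] D_def by simp
  have "p_next p \<alpha> k B = (D - (1 - p) * (real k + \<alpha> * real B)) / D"
    using D unfolding p_next_def D_def by (simp add: field_simps)
  moreover have "D - (1 - p) * (real k + \<alpha> * real B) = real k * p * (1 + \<alpha>) - \<alpha> * (1 - p) * (real B - 1)"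
    unfolding D_def by (simp add: algebra_simps)
  ultimately show ?thesis using D by (simp add: zero_le_divide_iff)
qed

theorem lemmaA2:
  fixes p \<alpha> :: real
  assumes "0 < p" and "p < 1" and "\<alpha> > -1"
  shows "(p \<ge> 1/2 \<longrightarrow>
            (\<forall>k B::nat. 1 \<le> k \<longrightarrow> 1 \<le> B \<longrightarrow> B \<le> k \<longrightarrow> p_next p \<alpha> k B \<ge> 0))
       \<and> (p < 1/2 \<longrightarrow>
            ((\<forall>k B::nat. 1 \<le> k \<longrightarrow> 1 \<le> B \<longrightarrow> B \<le> k \<longrightarrow> p_next p \<alpha> k B \<ge> 0)
             \<longleftrightarrow> \<alpha> \<le> p / (1 - 2 * p)))"
proof -
  have suff: "p_next p \<alpha> k B \<ge> 0" if k1: "1 \<le> k" and B1: "1 \<le> B" and Bk: "B \<le> k"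
     and c: "\<alpha> \<le> 0 \<or> p - \<alpha> * (1 - 2 * p) \<ge> 0" for k B :: nat
  proof -
    have kr: "real k \<ge> 1" "real B \<ge> 1" "real B \<le> real k" using k1 B1 Bk by auto
    have "real k * p * (1 + \<alpha>) - \<alpha> * (1 - p) * (real B - 1) \<ge> 0"
    proof (cases "\<alpha> \<le> 0")
      case True
      have "real k * p * (1 + \<alpha>) \<ge> 0" using assms kr by simp
      moreover have "\<alpha> * (1 - p) * (real B - 1) \<le> 0"
        using True assms kr by (intro mult_nonpos_nonneg) (auto intro: mult_nonpos_nonneg)
      ultimately show ?thesis by linarith
    next
      case False
      then have g: "p - \<alpha> * (1 - 2 * p) \<ge> 0" using c by auto
      have "\<alpha> * (1 - p) * (real B - 1) \<le> \<alpha> * (1 - p) * (real k - 1)"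
        using False assms kr by (intro mult_left_mono) auto
      moreover have "real k * p * (1 + \<alpha>) - \<alpha> * (1 - p) * (real k - 1)
          = real k * (p - \<alpha> * (1 - 2 * p)) + \<alpha> * (1 - p)" by (simp add: algebra_simps)
      moreover have "real k * (p - \<alpha> * (1 - 2 * p)) \<ge> 0" using g kr by simp
      moreover have "\<alpha> * (1 - p) \<ge> 0" using False assms by simp
      ultimately show ?thesis by linarith
    qed
    then show ?thesis using key[OF assms k1] by simp
  qed
  have part1: "p \<ge> 1/2 \<longrightarrow>
            (\<forall>k B::nat. 1 \<le> k \<longrightarrow> 1 \<le> B \<longrightarrow> B \<le> k \<longrightarrow> p_next p \<alpha> k B \<ge> 0)"
  proof (intro impI allI)
    fix k B :: nat
    assume h: "p \<ge> 1/2" "1 \<le> k" "1 \<le> B" "B \<le> k"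
    have "\<alpha> \<le> 0 \<or> p - \<alpha> * (1 - 2 * p) \<ge> 0"
    proof (cases "\<alpha> \<le> 0")
      case False
      have "\<alpha> * (1 - 2 * p) \<le> 0" using False h by (intro mult_nonneg_nonpos) auto
      then show ?thesis using assms by linarith
    qed simp
    then show "p_next p \<alpha> k B \<ge> 0" using suff h by blast
  qed
  have part2: "p < 1/2 \<longrightarrow>
            ((\<forall>k B::nat. 1 \<le> k \<longrightarrow> 1 \<le> B \<longrightarrow> B \<le> k \<longrightarrow> p_next p \<alpha> k B \<ge> 0)
             \<longleftrightarrow> \<alpha> \<le> p / (1 - 2 * p))"
  proof
    assume hp: "p < 1/2"
    have q: "1 - 2 * p > 0" using hp by simp
    have eqv: "\<alpha> \<le> p / (1 - 2 * p) \<longleftrightarrow> p - \<alpha> * (1 - 2 * p) \<ge> 0"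
      using q by (simp add: pos_le_divide_eq)
    show "(\<forall>k B::nat. 1 \<le> k \<longrightarrow> 1 \<le> B \<longrightarrow> B \<le> k \<longrightarrow> p_next p \<alpha> k B \<ge> 0)
             \<longleftrightarrow> \<alpha> \<le> p / (1 - 2 * p)"
    proof
      assume "\<alpha> \<le> p / (1 - 2 * p)"
      then show "\<forall>k B::nat. 1 \<le> k \<longrightarrow> 1 \<le> B \<longrightarrow> B \<le> k \<longrightarrow> p_next p \<alpha> k B \<ge> 0"
        using suff eqv by blast
    next
      assume all: "\<forall>k B::nat. 1 \<le> k \<longrightarrow> 1 \<le> B \<longrightarrow> B \<le> k \<longrightarrow> p_next p \<alpha> k B \<ge> 0"
      show "\<alpha> \<le> p / (1 - 2 * p)"
      proof (rule ccontr)
        assume "\<not> ?thesis"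
        then have c: "\<alpha> * (1 - 2 * p) - p > 0" using eqv by simp
        have apos: "\<alpha> > 0"
        proof (rule ccontr)
          assume "\<not> \<alpha> > 0"
          then have "\<alpha> * (1 - 2 * p) \<le> 0" using q by (intro mult_nonpos_nonneg) auto
          then show False using c assms by linarith
        qed
        define k :: nat where "k = nat \<lceil>\<alpha> * (1 - p) / (\<alpha> * (1 - 2 * p) - p)\<rceil> + 1"
        have kgt: "real k > \<alpha> * (1 - p) / (\<alpha> * (1 - 2 * p) - p)"
          unfolding k_def by linarith
        have k1: "1 \<le> k" unfolding k_def by simp
        have "real k * (\<alpha> * (1 - 2 * p) - p) > \<alpha> * (1 - p)"
          using kgt c by (simp add: pos_divide_less_eq)
        then have neg: "real k * p * (1 + \<alpha>) - \<alpha> * (1 - p) * (real k - 1) < 0"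
          by (simp add: algebra_simps)
        have "p_next p \<alpha> k k \<ge> 0" using all k1 by blast
        then have "real k * p * (1 + \<alpha>) - \<alpha> * (1 - p) * (real k - 1) \<ge> 0"
          using key[OF assms k1] by simp
        then show False using neg by linarith
      qed
    qed
  qed
  show ?thesis using part1 part2 by blast
qed

end
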